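(* Let $X_1,\dots,X_n$ be mutually independent random variables, $X_i$ taking values in a set $D_i$ according to a given distribution, with product distribution $\mu$, and let $A_1,\dots,A_m$ be events, $A_i$ determined by the variables indexed by $\mathrm{vbl}(A_i)\subseteq[n]$. Call distinct $i,j$ dependent if $\mathrm{vbl}(A_i)\cap\mathrm{vbl}(A_j)\ne\emptyset$, and assume that for every dependent pair $i,j$, $\Pr_\mu(A_i\wedge A_j)=0$. Consider the algorithm: draw all variables independently from their distributions; while at least one $A_i$ occurs, let $I$ be the set of indices of occurring events and independently resample all variables in $\bigcup_{i\in I}\mathrm{vbl}(A_i)$; when no $A_i$ occurs, output the current assignment. Then, when the algorithm halts, its output is distributed as $\mu$ conditioned on $\bigwedge_{i=1}^m\overline{A_i}$. *)

theory Defs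
  imports "HOL-Probability.Probability"
begin

text \<open>Product distribution of n independent variables X_0..X_{n-1}; variable k has law p k.
  Assignments are functions nat => 'a, fixed to undefined outside the index range.\<close>
definition prod_dist :: "nat \<Rightarrow> (nat \<Rightarrow> 'a pmf) \<Rightarrow> (nat \<Rightarrow> 'a) pmf" where
  "prod_dist n p = Pi_pmf {..<n} undefined p"

definition determined_by :: "(nat \<Rightarrow> 'a) set \<Rightarrow> nat set \<Rightarrow> bool" where
  "determined_by E V \<longleftrightarrow> (\<forall>\<sigma> \<tau>. (\<forall>k\<in>V. \<sigma> k = \<tau> k) \<longrightarrow> (\<sigma> \<in> E \<longleftrightarrow> \<tau> \<in> E))"

definition occurring :: "nat \<Rightarrow> (nat \<Rightarrow> (nat \<Rightarrow> 'a) set) \<Rightarrow> (nat \<Rightarrow> 'a) \<Rightarrow> nat set" where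
  "occurring m A s = {i. i < m \<and> s \<in> A i}"

definition good_set :: "nat \<Rightarrow> (nat \<Rightarrow> (nat \<Rightarrow> 'a) set) \<Rightarrow> (nat \<Rightarrow> 'a) set" where
  "good_set m A = {s. \<forall>i<m. s \<notin> A i}"

definition prs_step :: "nat \<Rightarrow> (nat \<Rightarrow> 'a pmf) \<Rightarrow> nat \<Rightarrow> (nat \<Rightarrow> (nat \<Rightarrow> 'a) set)
    \<Rightarrow> (nat \<Rightarrow> nat set) \<Rightarrow> (nat \<Rightarrow> 'a) \<Rightarrow> (nat \<Rightarrow> 'a) pmf" where
  "prs_step n p m A vbl s =
     (if occurring m A s = {} then return_pmf s
      else (let S = (\<Union>i\<in>occurring m A s. vbl i) in
            map_pmf (\<lambda>\<tau> k. if k \<in> S then \<tau> k else s k) (prod_dist n p)))"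

text \<open>Distribution of the state after t rounds (initially all variables drawn from mu).
  The algorithm has halted by round t iff this state lies in good_set m A.\<close>
primrec prs_state :: "nat \<Rightarrow> (nat \<Rightarrow> 'a pmf) \<Rightarrow> nat \<Rightarrow> (nat \<Rightarrow> (nat \<Rightarrow> 'a) set)
    \<Rightarrow> (nat \<Rightarrow> nat set) \<Rightarrow> nat \<Rightarrow> (nat \<Rightarrow> 'a) pmf" where
  "prs_state n p m A vbl 0 = prod_dist n p"
| "prs_state n p m A vbl (Suc t) = bind_pmf (prs_state n p m A vbl t) (prs_step n p m A vbl)"

end

theory Submission
  imports Defs
begin

definition mrg :: "nat set \<Rightarrow> (nat \<Rightarrow> 'a) \<Rightarrow> (nat \<Rightarrow> 'a) \<Rightarrow> (nat \<Rightarrow> 'a)" where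
  "mrg S s \<tau> = (\<lambda>k. if k \<in> S then \<tau> k else s k)"

lemma mrg_mrg[simp]: "mrg S (mrg S a b) c = mrg S a c"
  by (auto simp: mrg_def fun_eq_iff)

lemma decomp:
  "prod_dist n p = map_pmf (\<lambda>(a,b). mrg S a b) (pair_pmf (prod_dist n p) (prod_dist n p))"
proof -
  define A' where "A' = S \<inter> {..<n}"
  define B where "B = {..<n} - A'"
  define rA where "rA = (\<lambda>f x. if x \<in> A' then f x else (undefined::'a))"
  define rB where "rB = (\<lambda>f x. if x \<in> B then f x else (undefined::'a))"
  define h0 where "h0 = (\<lambda>(f,g) x. if x\<in>A' then f x else (g x::'a))"
  have u: "{..<n} = A' \<union> B" by (auto simp: A'_def B_def)
  have eq1: "prod_dist n p = map_pmf h0 (pair_pmf (Pi_pmf A' undefined p) (Pi_pmf B undefined p))"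
    unfolding prod_dist_def u h0_def by (rule Pi_pmf_union) (auto simp: A'_def B_def)
  have eqA: "Pi_pmf A' undefined p = map_pmf rA (prod_dist n p)"
    unfolding prod_dist_def rA_def by (rule Pi_pmf_subset) (auto simp: A'_def)
  have eqB: "Pi_pmf B undefined p = map_pmf rB (prod_dist n p)"
    unfolding prod_dist_def rB_def by (rule Pi_pmf_subset) (auto simp: B_def)
  have "pair_pmf (Pi_pmf A' undefined p) (Pi_pmf B undefined p)
      = map_pmf (\<lambda>(a, b). (rA a, rB b)) (pair_pmf (prod_dist n p) (prod_dist n p))"
    unfolding eqA eqB by (rule map_pair[symmetric])
  also have "\<dots> = map_pmf (\<lambda>(a, b). (rA a, rB b)) (map_pmf (\<lambda>(x, y). (y, x)) (pair_pmf (prod_dist n p) (prod_dist n p)))"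
    by (rule arg_cong[where f="map_pmf _"], rule pair_commute_pmf)
  finally have eq2: "pair_pmf (Pi_pmf A' undefined p) (Pi_pmf B undefined p)
      = map_pmf ((\<lambda>(a, b). (rA a, rB b)) \<circ> (\<lambda>(x, y). (y, x))) (pair_pmf (prod_dist n p) (prod_dist n p))"
    by (simp only: map_pmf_comp o_def)
  have eq3: "prod_dist n p = map_pmf (h0 \<circ> ((\<lambda>(a, b). (rA a, rB b)) \<circ> (\<lambda>(x, y). (y, x)))) (pair_pmf (prod_dist n p) (prod_dist n p))"
    by (rule trans[OF eq1]) (simp only: eq2 map_pmf_comp o_def)
  have "map_pmf (h0 \<circ> ((\<lambda>(a, b). (rA a, rB b)) \<circ> (\<lambda>(x, y). (y, x)))) (pair_pmf (prod_dist n p) (prod_dist n p))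
     = map_pmf (\<lambda>(a,b). mrg S a b) (pair_pmf (prod_dist n p) (prod_dist n p))"
  proof (rule map_pmf_cong[OF refl])
    fix x assume "x \<in> set_pmf (pair_pmf (prod_dist n p) (prod_dist n p))"
    then obtain a b where x: "x = (a,b)" "a \<in> set_pmf (prod_dist n p)" "b \<in> set_pmf (prod_dist n p)"
      by auto
    have "\<forall>k. k \<notin> {..<n} \<longrightarrow> a k = undefined" "\<forall>k. k \<notin> {..<n} \<longrightarrow> b k = undefined"
      using x set_Pi_pmf_subset[of "{..<n}" undefined p] unfolding prod_dist_def by auto
    then show "(h0 \<circ> ((\<lambda>(a, b). (rA a, rB b)) \<circ> (\<lambda>(x, y). (y, x)))) x = (case x of (a, b) \<Rightarrow> mrg S a b)"
      using x by (auto simp: fun_eq_iff mrg_def A'_def B_def h0_def rA_def rB_def)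
  qed
  with eq3 show ?thesis by (rule trans)
qed

lemma sym_aux:
  "(\<integral>\<^sup>+\<sigma>. g \<sigma> * (\<integral>\<^sup>+\<tau>. h (mrg S \<sigma> \<tau>) \<partial>prod_dist n p) \<partial>prod_dist n p)
   = (\<integral>\<^sup>+a. (\<integral>\<^sup>+b. g (mrg S a b) \<partial>prod_dist n p) * (\<integral>\<^sup>+c. h (mrg S a c) \<partial>prod_dist n p) \<partial>prod_dist n p)"
proof -
  have "(\<integral>\<^sup>+\<sigma>. g \<sigma> * (\<integral>\<^sup>+\<tau>. h (mrg S \<sigma> \<tau>) \<partial>prod_dist n p) \<partial>prod_dist n p)
     = (\<integral>\<^sup>+\<sigma>. g \<sigma> * (\<integral>\<^sup>+\<tau>. h (mrg S \<sigma> \<tau>) \<partial>prod_dist n p) \<partial>map_pmf (\<lambda>(a,b). mrg S a b) (pair_pmf (prod_dist n p) (prod_dist n p)))"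
    by (simp only: decomp[symmetric])
  also have "\<dots> = (\<integral>\<^sup>+a. \<integral>\<^sup>+b. g (mrg S a b) * (\<integral>\<^sup>+c. h (mrg S a c) \<partial>prod_dist n p) \<partial>prod_dist n p \<partial>prod_dist n p)"
    by (simp add: nn_integral_pair_pmf')
  also have "\<dots> = (\<integral>\<^sup>+a. (\<integral>\<^sup>+b. g (mrg S a b) \<partial>prod_dist n p) * (\<integral>\<^sup>+c. h (mrg S a c) \<partial>prod_dist n p) \<partial>prod_dist n p)"
    by (simp add: nn_integral_multc)
  finally show ?thesis .
qed

lemma sym:
  "(\<integral>\<^sup>+\<sigma>. g \<sigma> * (\<integral>\<^sup>+\<tau>. h (mrg S \<sigma> \<tau>) \<partial>prod_dist n p) \<partial>prod_dist n p)
   = (\<integral>\<^sup>+\<sigma>. h \<sigma> * (\<integral>\<^sup>+\<tau>. g (mrg S \<sigma> \<tau>) \<partial>prod_dist n p) \<partial>prod_dist n p)"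
  by (simp add: sym_aux mult.commute)


definition Sv :: "(nat \<Rightarrow> nat set) \<Rightarrow> nat set \<Rightarrow> nat set" where
  "Sv vbl I = (\<Union>i\<in>I. vbl i)"

lemma step_eq: "prs_step n p m A vbl s = map_pmf (mrg (Sv vbl (occurring m A s)) s) (prod_dist n p)"
proof (cases "occurring m A s = {}")
  case True
  have e: "mrg (Sv vbl (occurring m A s)) s = (\<lambda>_. s)"
    unfolding True by (intro ext) (simp add: mrg_def Sv_def)
  show ?thesis unfolding prs_step_def if_P[OF True] e map_pmf_const ..
next
  case False
  have e: "mrg (Sv vbl (occurring m A s)) s = (\<lambda>\<tau> k. if k \<in> (\<Union>i\<in>occurring m A s. vbl i) then \<tau> k else s k)"
    by (intro ext) (simp only: mrg_def Sv_def)
  show ?thesis unfolding prs_step_def if_not_P[OF False] Let_def e ..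
qed

lemma supp_mrg:
  assumes "a \<in> set_pmf (prod_dist n p)" "b \<in> set_pmf (prod_dist n p)"
  shows "mrg S a b \<in> set_pmf (prod_dist n p)"
  using assms unfolding prod_dist_def set_Pi_pmf[OF finite_lessThan] PiE_dflt_def mrg_def by auto

lemma extremal_pt:
  assumes extremal: "\<And>i j. i < m \<Longrightarrow> j < m \<Longrightarrow> i \<noteq> j \<Longrightarrow> vbl i \<inter> vbl j \<noteq> {} \<Longrightarrow>
                     measure_pmf.prob (prod_dist n p) (A i \<inter> A j) = 0"
    and "x \<in> set_pmf (prod_dist n p)" "i < m" "j < m" "i \<noteq> j" "vbl i \<inter> vbl j \<noteq> {}"
    and "x \<in> A i" "x \<in> A j"
  shows False
proof -
  have "measure_pmf.prob (prod_dist n p) (A i \<inter> A j) > 0"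
    by (rule measure_pmf_posI) (use assms in auto)
  moreover have "measure_pmf.prob (prod_dist n p) (A i \<inter> A j) = 0"
    by (rule extremal) (use assms in auto)
  ultimately show False by simp
qed

lemma factor_pt:
  assumes determined: "\<And>i. i < m \<Longrightarrow> determined_by (A i) (vbl i)"
    and extremal: "\<And>i j. i < m \<Longrightarrow> j < m \<Longrightarrow> i \<noteq> j \<Longrightarrow> vbl i \<inter> vbl j \<noteq> {} \<Longrightarrow>
                     measure_pmf.prob (prod_dist n p) (A i \<inter> A j) = 0"
    and s: "\<sigma> \<in> set_pmf (prod_dist n p)" and t: "\<tau> \<in> set_pmf (prod_dist n p)"
    and I: "I \<subseteq> {..<m}"
  shows "occurring m A (mrg (Sv vbl I) \<sigma> \<tau>) = I \<longleftrightarrow>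
    (occurring m A \<sigma> \<inter> ({j. j < m \<and> vbl j \<inter> Sv vbl I = {}} - I) = {} \<and> (\<forall>i\<in>I. \<tau> \<in> A i))"
proof -
  define c where "c = mrg (Sv vbl I) \<sigma> \<tau>"
  have cs: "c \<in> set_pmf (prod_dist n p)" using supp_mrg[OF s t] c_def by simp
  have a: "c \<in> A i \<longleftrightarrow> \<tau> \<in> A i" if "i \<in> I" for i
  proof -
    have im: "i < m" using that I by auto
    have "\<forall>k\<in>vbl i. c k = \<tau> k" using that unfolding c_def mrg_def Sv_def by auto
    then show ?thesis using determined[OF im] unfolding determined_by_def by blast
  qed
  have b: "c \<in> A j \<longleftrightarrow> \<sigma> \<in> A j" if "j < m" "vbl j \<inter> Sv vbl I = {}" for j
  proof -
    have "\<forall>k\<in>vbl j. c k = \<sigma> k" using that(2) unfolding c_def mrg_def by auto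
    then show ?thesis using determined[OF that(1)] unfolding determined_by_def by blast
  qed
  have cc: "c \<notin> A j" if "j < m" "j \<notin> I" "vbl j \<inter> Sv vbl I \<noteq> {}" "\<forall>i\<in>I. c \<in> A i" for j
  proof
    assume cj: "c \<in> A j"
    from that(3) obtain i where i: "i \<in> I" "vbl i \<inter> vbl j \<noteq> {}" unfolding Sv_def by blast
    have ij: "i \<noteq> j" using i(1) that(2) by auto
    have "i < m" using i(1) I by auto
    then show False using extremal_pt[where m=m and vbl=vbl and A=A, OF extremal cs \<open>i < m\<close> that(1) ij i(2)] that(4) i(1) cj by blast
  qed
  show ?thesis unfolding c_def[symmetric]
  proof
    assume o: "occurring m A c = I"
    then have ci: "\<forall>i\<in>I. c \<in> A i" unfolding occurring_def by auto
    show "occurring m A \<sigma> \<inter> ({j. j < m \<and> vbl j \<inter> Sv vbl I = {}} - I) = {} \<and> (\<forall>i\<in>I. \<tau> \<in> A i)"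
    proof
      show "\<forall>i\<in>I. \<tau> \<in> A i" using a ci by auto
      show "occurring m A \<sigma> \<inter> ({j. j < m \<and> vbl j \<inter> Sv vbl I = {}} - I) = {}"
        using b o unfolding occurring_def by auto
    qed
  next
    assume h: "occurring m A \<sigma> \<inter> ({j. j < m \<and> vbl j \<inter> Sv vbl I = {}} - I) = {} \<and> (\<forall>i\<in>I. \<tau> \<in> A i)"
    then have ci: "\<forall>i\<in>I. c \<in> A i" using a by auto
    show "occurring m A c = I"
    proof
      show "I \<subseteq> occurring m A c" using ci I unfolding occurring_def by auto
      show "occurring m A c \<subseteq> I"
      proof
        fix j assume j: "j \<in> occurring m A c"
        show "j \<in> I"
        proof (rule ccontr)
          assume nj: "j \<notin> I"
          show False
          proof (cases "vbl j \<inter> Sv vbl I = {}")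
            case True
            then show False using h b[of j] j nj unfolding occurring_def by auto
          next
            case False
            then show False using cc[of j] j nj ci unfolding occurring_def by auto
          qed
        qed
      qed
    qed
  qed
qed


lemma step_inv:
  assumes determined: "\<And>i. i < m \<Longrightarrow> determined_by (A i) (vbl i)"
    and extremal: "\<And>i j. i < m \<Longrightarrow> j < m \<Longrightarrow> i \<noteq> j \<Longrightarrow> vbl i \<inter> vbl j \<noteq> {} \<Longrightarrow>
                     measure_pmf.prob (prod_dist n p) (A i \<inter> A j) = 0"
    and inv: "\<forall>\<sigma>. ennreal (pmf D \<sigma>) = f (occurring m A \<sigma>) * ennreal (pmf (prod_dist n p) \<sigma>)"
  shows "\<exists>F. \<forall>\<sigma>'. ennreal (pmf (bind_pmf D (prs_step n p m A vbl)) \<sigma>')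
                 = F (occurring m A \<sigma>') * ennreal (pmf (prod_dist n p) \<sigma>')"
proof -
  let ?O = "occurring m A"
  let ?\<mu> = "prod_dist n p"
  define Q where "Q I = emeasure (measure_pmf ?\<mu>) {\<tau>. \<forall>i\<in>I. \<tau> \<in> A i}" for I
  define J where "J I = {j. j < m \<and> vbl j \<inter> Sv vbl I = {}} - I" for I
  define F where "F Oc = (\<Sum>I\<in>Pow {..<m}. f I * (if Oc \<inter> J I = {} then Q I else 0))" for Oc
  show ?thesis
  proof (intro exI allI)
    fix \<sigma>'
    let ?X = "\<lambda>I \<sigma>. \<integral>\<^sup>+\<tau>. indicator {\<sigma>'} (mrg (Sv vbl I) \<sigma> \<tau>) \<partial>?\<mu>"
    have 1: "ennreal (pmf (bind_pmf D (prs_step n p m A vbl)) \<sigma>') = (\<integral>\<^sup>+\<sigma>. f (?O \<sigma>) * ?X (?O \<sigma>) \<sigma> \<partial>?\<mu>)"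
    proof -
      have "ennreal (pmf (bind_pmf D (prs_step n p m A vbl)) \<sigma>') = (\<integral>\<^sup>+\<sigma>. ennreal (pmf (prs_step n p m A vbl \<sigma>) \<sigma>') \<partial>D)"
        by (rule ennreal_pmf_bind)
      also have "\<dots> = (\<integral>\<^sup>+\<sigma>. ?X (?O \<sigma>) \<sigma> \<partial>D)"
        by (simp add: step_eq ennreal_pmf_map indicator_vimage)
      also have "\<dots> = (\<integral>\<^sup>+\<sigma>. ennreal (pmf D \<sigma>) * ?X (?O \<sigma>) \<sigma> \<partial>count_space UNIV)"
        by (rule nn_integral_measure_pmf)
      also have "\<dots> = (\<integral>\<^sup>+\<sigma>. ennreal (pmf ?\<mu> \<sigma>) * (f (?O \<sigma>) * ?X (?O \<sigma>) \<sigma>) \<partial>count_space UNIV)"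
        using inv by (simp add: mult_ac)
      also have "\<dots> = (\<integral>\<^sup>+\<sigma>. f (?O \<sigma>) * ?X (?O \<sigma>) \<sigma> \<partial>?\<mu>)"
        by (rule nn_integral_measure_pmf[symmetric])
      finally show ?thesis .
    qed
    have 2: "f (?O \<sigma>) * ?X (?O \<sigma>) \<sigma> = (\<Sum>I\<in>Pow {..<m}. (f I * indicator {\<sigma>. ?O \<sigma> = I} \<sigma>) * ?X I \<sigma>)" for \<sigma>
    proof -
      have m: "?O \<sigma> \<in> Pow {..<m}" by (auto simp: occurring_def)
      have "(\<Sum>I\<in>Pow {..<m}. (f I * indicator {\<sigma>. ?O \<sigma> = I} \<sigma>) * ?X I \<sigma>)
          = (\<Sum>I\<in>Pow {..<m}. if ?O \<sigma> = I then f I * ?X I \<sigma> else 0)"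
        by (intro sum.cong) (auto simp: indicator_def)
      also have "\<dots> = f (?O \<sigma>) * ?X (?O \<sigma>) \<sigma>"
        using m by (simp add: sum.delta)
      finally show ?thesis by simp
    qed
    have 3: "(\<integral>\<^sup>+\<sigma>. (f I * indicator {\<sigma>. ?O \<sigma> = I} \<sigma>) * ?X I \<sigma> \<partial>?\<mu>)
       = ennreal (pmf ?\<mu> \<sigma>') * (f I * emeasure (measure_pmf ?\<mu>) {\<tau>. ?O (mrg (Sv vbl I) \<sigma>' \<tau>) = I})" for I
    proof -
      let ?G = "\<lambda>\<sigma>. \<integral>\<^sup>+\<tau>. f I * indicator {\<sigma>. ?O \<sigma> = I} (mrg (Sv vbl I) \<sigma> \<tau>) \<partial>?\<mu>"
      have "(\<integral>\<^sup>+\<sigma>. (f I * indicator {\<sigma>. ?O \<sigma> = I} \<sigma>) * ?X I \<sigma> \<partial>?\<mu>)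
          = (\<integral>\<^sup>+\<sigma>. indicator {\<sigma>'} \<sigma> * ?G \<sigma> \<partial>?\<mu>)"
        by (rule sym)
      also have "\<dots> = (\<integral>\<^sup>+\<sigma>. ?G \<sigma> * indicator {\<sigma>'} \<sigma> \<partial>?\<mu>)"
        by (rule nn_integral_cong) (rule mult.commute)
      also have "\<dots> = ?G \<sigma>' * emeasure (measure_pmf ?\<mu>) {\<sigma>'}"
        by simp
      also have "?G \<sigma>' = f I * emeasure (measure_pmf ?\<mu>) {\<tau>. ?O (mrg (Sv vbl I) \<sigma>' \<tau>) = I}"
      proof -
        have "?G \<sigma>' = (\<integral>\<^sup>+\<tau>. f I * indicator {\<tau>. ?O (mrg (Sv vbl I) \<sigma>' \<tau>) = I} \<tau> \<partial>?\<mu>)"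
          by (rule nn_integral_cong) (simp add: indicator_def)
        also have "\<dots> = f I * emeasure (measure_pmf ?\<mu>) {\<tau>. ?O (mrg (Sv vbl I) \<sigma>' \<tau>) = I}"
          by (simp add: nn_integral_cmult)
        finally show ?thesis .
      qed
      finally show ?thesis by (simp add: emeasure_pmf_single mult_ac)
    qed
    have 4: "emeasure (measure_pmf ?\<mu>) {\<tau>. ?O (mrg (Sv vbl I) \<sigma>' \<tau>) = I} = (if ?O \<sigma>' \<inter> J I = {} then Q I else 0)"
      if I: "I \<subseteq> {..<m}" and s: "\<sigma>' \<in> set_pmf ?\<mu>" for I
    proof -
      have e: "{\<tau>. ?O (mrg (Sv vbl I) \<sigma>' \<tau>) = I} \<inter> set_pmf ?\<mu>
             = (if ?O \<sigma>' \<inter> J I = {} then {\<tau>. \<forall>i\<in>I. \<tau> \<in> A i} else {}) \<inter> set_pmf ?\<mu>"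
        using factor_pt[where m=m and A=A and vbl=vbl and n=n and p=p and I=I, OF determined extremal s _ I] by (auto simp: J_def)
      have "emeasure (measure_pmf ?\<mu>) {\<tau>. ?O (mrg (Sv vbl I) \<sigma>' \<tau>) = I}
          = emeasure (measure_pmf ?\<mu>) ({\<tau>. ?O (mrg (Sv vbl I) \<sigma>' \<tau>) = I} \<inter> set_pmf ?\<mu>)"
        by (rule emeasure_Int_set_pmf[symmetric])
      also have "\<dots> = emeasure (measure_pmf ?\<mu>) ((if ?O \<sigma>' \<inter> J I = {} then {\<tau>. \<forall>i\<in>I. \<tau> \<in> A i} else {}) \<inter> set_pmf ?\<mu>)"
        using e by simp
      also have "\<dots> = emeasure (measure_pmf ?\<mu>) (if ?O \<sigma>' \<inter> J I = {} then {\<tau>. \<forall>i\<in>I. \<tau> \<in> A i} else {})"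
        by (rule emeasure_Int_set_pmf)
      also have "\<dots> = (if ?O \<sigma>' \<inter> J I = {} then Q I else 0)"
        by (simp add: Q_def)
      finally show ?thesis .
    qed
    have 5: "ennreal (pmf (bind_pmf D (prs_step n p m A vbl)) \<sigma>')
       = (\<Sum>I\<in>Pow {..<m}. ennreal (pmf ?\<mu> \<sigma>') * (f I * emeasure (measure_pmf ?\<mu>) {\<tau>. ?O (mrg (Sv vbl I) \<sigma>' \<tau>) = I}))"
    proof -
      have "ennreal (pmf (bind_pmf D (prs_step n p m A vbl)) \<sigma>')
          = (\<integral>\<^sup>+\<sigma>. (\<Sum>I\<in>Pow {..<m}. (f I * indicator {\<sigma>. ?O \<sigma> = I} \<sigma>) * ?X I \<sigma>) \<partial>?\<mu>)"
        unfolding 1 by (rule nn_integral_cong) (rule 2)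
      also have "\<dots> = (\<Sum>I\<in>Pow {..<m}. (\<integral>\<^sup>+\<sigma>. (f I * indicator {\<sigma>. ?O \<sigma> = I} \<sigma>) * ?X I \<sigma> \<partial>?\<mu>))"
        by (rule nn_integral_sum) simp
      also have "\<dots> = (\<Sum>I\<in>Pow {..<m}. ennreal (pmf ?\<mu> \<sigma>') * (f I * emeasure (measure_pmf ?\<mu>) {\<tau>. ?O (mrg (Sv vbl I) \<sigma>' \<tau>) = I}))"
        by (rule sum.cong[OF refl]) (rule 3)
      finally show ?thesis .
    qed
    show "ennreal (pmf (bind_pmf D (prs_step n p m A vbl)) \<sigma>') = F (?O \<sigma>') * ennreal (pmf ?\<mu> \<sigma>')"
    proof (cases "\<sigma>' \<in> set_pmf ?\<mu>")
      case True
      have "(\<Sum>I\<in>Pow {..<m}. ennreal (pmf ?\<mu> \<sigma>') * (f I * emeasure (measure_pmf ?\<mu>) {\<tau>. ?O (mrg (Sv vbl I) \<sigma>' \<tau>) = I}))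
          = (\<Sum>I\<in>Pow {..<m}. ennreal (pmf ?\<mu> \<sigma>') * (f I * (if ?O \<sigma>' \<inter> J I = {} then Q I else 0)))"
        by (rule sum.cong[OF refl]) (simp add: 4[OF _ True])
      also have "\<dots> = F (?O \<sigma>') * ennreal (pmf ?\<mu> \<sigma>')"
        by (simp add: F_def sum_distrib_left mult.commute)
      finally show ?thesis using 5 by simp
    next
      case False
      then have "pmf ?\<mu> \<sigma>' = 0" by (simp add: set_pmf_iff)
      then show ?thesis using 5 by simp
    qed
  qed
qed

theorem theorem8:
  fixes n m :: nat and p :: "nat \<Rightarrow> 'a pmf"
    and A :: "nat \<Rightarrow> (nat \<Rightarrow> 'a) set" and vbl :: "nat \<Rightarrow> nat set"
  assumes vbl_sub: "\<And>i. i < m \<Longrightarrow> vbl i \<subseteq> {..<n}"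
    and determined: "\<And>i. i < m \<Longrightarrow> determined_by (A i) (vbl i)"
    and extremal: "\<And>i j. i < m \<Longrightarrow> j < m \<Longrightarrow> i \<noteq> j \<Longrightarrow> vbl i \<inter> vbl j \<noteq> {} \<Longrightarrow>
                     measure_pmf.prob (prod_dist n p) (A i \<inter> A j) = 0"
    and halts: "set_pmf (prs_state n p m A vbl t) \<inter> good_set m A \<noteq> {}"
  shows "set_pmf (prod_dist n p) \<inter> good_set m A \<noteq> {}
         \<and> cond_pmf (prs_state n p m A vbl t) (good_set m A) = cond_pmf (prod_dist n p) (good_set m A)"
proof -
  let ?\<mu> = "prod_dist n p"
  let ?D = "prs_state n p m A vbl t"
  let ?G = "good_set m A"
  have inv: "\<exists>f. \<forall>\<sigma>. ennreal (pmf (prs_state n p m A vbl t') \<sigma>) = f (occurring m A \<sigma>) * ennreal (pmf ?\<mu> \<sigma>)" for t'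
  proof (induction t')
    case 0
    show ?case by (intro exI[of _ "\<lambda>_. 1"]) simp
  next
    case (Suc t')
    then obtain f where "\<forall>\<sigma>. ennreal (pmf (prs_state n p m A vbl t') \<sigma>) = f (occurring m A \<sigma>) * ennreal (pmf ?\<mu> \<sigma>)"
      by blast
    then show ?case using step_inv[OF determined extremal] by simp
  qed
  then obtain f where f: "\<And>\<sigma>. ennreal (pmf ?D \<sigma>) = f (occurring m A \<sigma>) * ennreal (pmf ?\<mu> \<sigma>)"
    by blast
  have G: "\<sigma> \<in> ?G \<longleftrightarrow> occurring m A \<sigma> = {}" for \<sigma>
    by (auto simp: good_set_def occurring_def)
  from halts obtain \<sigma>0 where s0: "\<sigma>0 \<in> set_pmf ?D" "\<sigma>0 \<in> ?G" by blast
  have O0: "occurring m A \<sigma>0 = {}" using s0 G by blast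
  have pD: "pmf ?D \<sigma>0 > 0" using s0 by (simp add: pmf_positive)
  have pmu: "pmf ?\<mu> \<sigma>0 > 0"
  proof (rule ccontr)
    assume "\<not> pmf ?\<mu> \<sigma>0 > 0"
    then have "pmf ?\<mu> \<sigma>0 = 0" using pmf_nonneg[of "prod_dist n p" \<sigma>0] by linarith
    then have "ennreal (pmf ?D \<sigma>0) = 0" using f[of \<sigma>0] by simp
    then show False using pD by simp
  qed
  have fin: "f {} \<noteq> \<top>"
  proof
    assume "f {} = \<top>"
    then have "ennreal (pmf ?D \<sigma>0) = \<top>" using f[of \<sigma>0] O0 pmu by (simp add: ennreal_mult_eq_top_iff)
    then show False by simp
  qed
  define c where "c = enn2real (f {})"
  have fc: "f {} = ennreal c" using fin by (simp add: c_def ennreal_enn2real_if)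
  have c0: "c \<ge> 0" by (simp add: c_def)
  have pt: "pmf ?D \<sigma> = c * pmf ?\<mu> \<sigma>" if "\<sigma> \<in> ?G" for \<sigma>
  proof -
    have "ennreal (pmf ?D \<sigma>) = ennreal (c * pmf ?\<mu> \<sigma>)"
      using f[of \<sigma>] that G fc c0 by (simp add: ennreal_mult)
    then show ?thesis using c0 by (simp add: ennreal_inj)
  qed
  have cpos: "c > 0" using pt[OF s0(2)] pD pmu c0
    by (metis less_eq_real_def mult_eq_0_iff)
  have ne: "set_pmf ?\<mu> \<inter> ?G \<noteq> {}" proof - have "\<sigma>0 \<in> set_pmf ?\<mu>" using pmu by (simp add: set_pmf_iff) then show ?thesis using s0(2) by blast qed
  have em: "emeasure (measure_pmf ?D) ?G = ennreal c * emeasure (measure_pmf ?\<mu>) ?G"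
  proof -
    have "emeasure (measure_pmf ?D) ?G = (\<integral>\<^sup>+\<sigma>. indicator ?G \<sigma> \<partial>?D)" by simp
    also have "\<dots> = (\<integral>\<^sup>+\<sigma>. ennreal (pmf ?D \<sigma>) * indicator ?G \<sigma> \<partial>count_space UNIV)"
      by (rule nn_integral_measure_pmf)
    also have "\<dots> = (\<integral>\<^sup>+\<sigma>. ennreal c * (ennreal (pmf ?\<mu> \<sigma>) * indicator ?G \<sigma>) \<partial>count_space UNIV)"
      by (rule nn_integral_cong) (auto simp: indicator_def pt c0 ennreal_mult)
    also have "\<dots> = ennreal c * (\<integral>\<^sup>+\<sigma>. ennreal (pmf ?\<mu> \<sigma>) * indicator ?G \<sigma> \<partial>count_space UNIV)"
      by (simp add: nn_integral_cmult)
    also have "(\<integral>\<^sup>+\<sigma>. ennreal (pmf ?\<mu> \<sigma>) * indicator ?G \<sigma> \<partial>count_space UNIV) = (\<integral>\<^sup>+\<sigma>. indicator ?G \<sigma> \<partial>?\<mu>)"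
      by (rule nn_integral_measure_pmf[symmetric])
    also have "\<dots> = emeasure (measure_pmf ?\<mu>) ?G" by simp
    finally show ?thesis .
  qed
  have meas: "measure_pmf.prob ?D ?G = c * measure_pmf.prob ?\<mu> ?G"
  proof -
    have "ennreal (measure_pmf.prob ?D ?G) = ennreal (c * measure_pmf.prob ?\<mu> ?G)"
      using em c0 by (simp add: measure_pmf.emeasure_eq_measure ennreal_mult)
    then show ?thesis using c0 by (simp add: ennreal_inj)
  qed
  have "cond_pmf ?D ?G = cond_pmf ?\<mu> ?G"
  proof (rule pmf_eqI)
    fix x
    show "pmf (cond_pmf ?D ?G) x = pmf (cond_pmf ?\<mu> ?G) x"
      unfolding pmf_cond[OF halts] pmf_cond[OF ne] using pt meas cpos by auto
  qed
  with ne show ?thesis by blast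
qed

end
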